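(* Fix positive reals $1 < p < q' < \frac{q}{2}$ and let $c = \min(\frac{q'}{2}, q - 2q') > 0$. There is $N_0(p,q,q')$ such that for all $n > N_0(p,q,q')$ the following holds. Let $0 \le A, B, C, D \le 1$ satisfy $|A - C| \le n^{-q}$, $|B - D| \le n^{-q}$, and $B, D \ge n^{-p}$. Let $\theta, \theta'$ each be uniformly distributed on $[0,2\pi)$, and set $S = A + B\cos(\theta)^2$ and $S' = C + D\cos(\theta')^2$. Then there exists a coupling of $\theta$ and $\theta'$ (i.e. a joint law with these uniform marginals) such that $$\mathbb{P}[S = S'] \ge 1 - 6 \times 10^3\, n^{-c}$$ and, almost surely, $$\cos(\theta)\cos(\theta') \ge 0, \qquad \sin(\theta)\sin(\theta') \ge 0.$$ *)

theory Defs
  imports "HOL-Probability.Probability"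
begin

end

theory Submission
  imports Defs
begin


lemma unif01_le:
  assumes "0 \<le> c" "c \<le> 1"
  shows "emeasure (uniform_measure lborel {0..1::real}) {..c} = ennreal c"
    and "emeasure (uniform_measure lborel {0..1::real}) {c<..} = ennreal (1 - c)"
proof -
  have "{0..1::real} \<inter> {..c} = {0..c}" using assms by auto
  then show "emeasure (uniform_measure lborel {0..1::real}) {..c} = ennreal c"
    using assms by (simp add: divide_ennreal_def)
  have "{0..1::real} \<inter> {c<..} = {c<..1}" using assms by auto
  then show "emeasure (uniform_measure lborel {0..1::real}) {c<..} = ennreal (1 - c)"
    using assms by (simp add: divide_ennreal_def)
qed

lemma nn_integral_T:
  assumes "0 \<le> c" "c \<le> 1"
  shows "(\<integral>\<^sup>+t. (if t \<le> c then a else b) \<partial>uniform_measure lborel {0..1::real}) = a * ennreal c + b * ennreal (1 - c)"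
proof -
  have "(\<integral>\<^sup>+t. (if t \<le> c then a else b) \<partial>uniform_measure lborel {0..1::real})
      = (\<integral>\<^sup>+t. a * indicator {..c} t + b * indicator {c<..} t \<partial>uniform_measure lborel {0..1::real})"
    by (intro nn_integral_cong) (auto split: split_indicator)
  also have "\<dots> = a * emeasure (uniform_measure lborel {0..1::real}) {..c} + b * emeasure (uniform_measure lborel {0..1::real}) {c<..}"
    by (subst nn_integral_add) (auto simp: nn_integral_cmult_indicator)
  finally show ?thesis using unif01_le[OF assms] by simp
qed

lemma core_coupling:
  fixes I :: "real set" and w k \<psi> :: "real \<Rightarrow> real"
  defines "U \<equiv> uniform_measure lborel I"
  assumes I[measurable]: "I \<in> sets borel" and I0: "emeasure lborel I \<noteq> 0" and Ifin: "emeasure lborel I \<noteq> \<infinity>"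
  and [measurable]: "w \<in> borel_measurable borel" "k \<in> borel_measurable borel" "\<psi> \<in> borel_measurable borel"
  and w01: "\<And>x. 0 \<le> w x \<and> w x \<le> 1" and k01: "\<And>x. 0 \<le> k x \<and> k x \<le> 1"
  and psiI: "\<And>x. x \<in> I \<Longrightarrow> \<psi> x \<in> I"
  and ident: "\<And>Y. Y \<in> sets borel \<Longrightarrow> (\<integral>\<^sup>+x. ennreal (w x) * indicator Y (\<psi> x) \<partial>U) = (\<integral>\<^sup>+y. ennreal (k y) * indicator Y y \<partial>U)"
  and pos: "(\<integral>\<^sup>+x. ennreal (1 - w x) \<partial>U) \<noteq> 0"
  shows "\<exists>K. prob_space K \<and> sets K = sets (borel \<Otimes>\<^sub>M borel) \<and> distr K borel fst = U \<and> distr K borel snd = U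
     \<and> (\<forall>E\<in>sets (borel \<Otimes>\<^sub>M borel). emeasure K E \<ge> (\<integral>\<^sup>+x. ennreal (w x) * indicator E (x, \<psi> x) \<partial>U))
     \<and> (AE z in K. fst z \<in> I \<and> snd z \<in> I)"
proof -
  interpret U: prob_space U unfolding U_def by (rule prob_space_uniform_measure[OF I0 Ifin])
  have sU[measurable_cong, simp]: "sets U = sets borel" unfolding U_def by simp
  have spU[simp]: "space U = UNIV" unfolding U_def by simp
  define T where "T = uniform_measure lborel {0..1::real}"
  interpret T: prob_space T unfolding T_def by (rule prob_space_uniform_measure) auto
  have sT[measurable_cong, simp]: "sets T = sets borel" unfolding T_def by simp
  have spT[simp]: "space T = UNIV" unfolding T_def by simp
  have one_split: "\<And>f. f \<in> borel_measurable borel \<Longrightarrow> (\<And>x. 0 \<le> f x \<and> f x \<le> 1) \<Longrightarrow>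
      (\<integral>\<^sup>+x. ennreal (f x) \<partial>U) + (\<integral>\<^sup>+x. ennreal (1 - f x) \<partial>U) = 1"
  proof -
    fix f :: "real \<Rightarrow> real" assume f[measurable]: "f \<in> borel_measurable borel" and f01: "\<And>x. 0 \<le> f x \<and> f x \<le> 1"
    have "(\<integral>\<^sup>+x. ennreal (f x) \<partial>U) + (\<integral>\<^sup>+x. ennreal (1 - f x) \<partial>U) = (\<integral>\<^sup>+x. ennreal (f x) + ennreal (1 - f x) \<partial>U)"
      by (subst nn_integral_add) auto
    also have "\<dots> = (\<integral>\<^sup>+x. 1 \<partial>U)"
      using f01 by (intro nn_integral_cong) (simp add: ennreal_plus[symmetric] del: ennreal_plus)
    finally show "(\<integral>\<^sup>+x. ennreal (f x) \<partial>U) + (\<integral>\<^sup>+x. ennreal (1 - f x) \<partial>U) = 1"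
      using U.emeasure_space_1 by simp
  qed
  define R where "R = (\<integral>\<^sup>+y. ennreal (1 - k y) \<partial>U)"
  have wk: "(\<integral>\<^sup>+x. ennreal (w x) \<partial>U) = (\<integral>\<^sup>+y. ennreal (k y) \<partial>U)"
    using ident[of UNIV] by simp
  have sk: "(\<integral>\<^sup>+x. ennreal (k x) \<partial>U) + (\<integral>\<^sup>+x. ennreal (1 - k x) \<partial>U) = 1"
    by (rule one_split) (auto simp: k01)
  have sw: "(\<integral>\<^sup>+x. ennreal (w x) \<partial>U) + (\<integral>\<^sup>+x. ennreal (1 - w x) \<partial>U) = 1"
    by (rule one_split) (auto simp: w01)
  have kfin: "(\<integral>\<^sup>+y. ennreal (k y) \<partial>U) \<noteq> \<infinity>"
  proof
    assume "(\<integral>\<^sup>+y. ennreal (k y) \<partial>U) = \<infinity>"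
    with sk show False by simp
  qed
  have RW: "(\<integral>\<^sup>+x. ennreal (1 - w x) \<partial>U) = R"
  proof -
    have "(\<integral>\<^sup>+x. ennreal (k x) \<partial>U) + (\<integral>\<^sup>+x. ennreal (1 - w x) \<partial>U) = (\<integral>\<^sup>+x. ennreal (k x) \<partial>U) + R"
      using sk sw wk unfolding R_def by simp
    then show ?thesis using kfin by (simp add: ennreal_add_left_cancel)
  qed
  have R0: "R \<noteq> 0" using pos RW by simp
  have Rfin: "R \<noteq> \<infinity>"
  proof
    assume "R = \<infinity>"
    with sk show False unfolding R_def by simp
  qed
  define \<nu> where "\<nu> = density U (\<lambda>y. ennreal (1 - k y) / R)"
  have s\<nu>[measurable_cong, simp]: "sets \<nu> = sets borel" unfolding \<nu>_def by simp
  have sp\<nu>[simp]: "space \<nu> = UNIV" unfolding \<nu>_def by simp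
  have em\<nu>: "\<And>Y. Y \<in> sets borel \<Longrightarrow> emeasure \<nu> Y = (\<integral>\<^sup>+y. ennreal (1 - k y) * indicator Y y \<partial>U) / R"
    unfolding \<nu>_def by (subst emeasure_density) (auto simp: nn_integral_divide[symmetric] intro!: nn_integral_cong split: split_indicator)
  interpret \<nu>: prob_space \<nu>
  proof
    show "emeasure \<nu> (space \<nu>) = 1" using em\<nu>[of UNIV] R0 Rfin by (simp add: R_def[symmetric] ennreal_divide_self less_top[symmetric])
  qed
  interpret TN: prob_space "T \<Otimes>\<^sub>M \<nu>" by (rule prob_space_pair) unfold_locales
  define \<Omega> where "\<Omega> = U \<Otimes>\<^sub>M (T \<Otimes>\<^sub>M \<nu>)"
  interpret \<Omega>: prob_space \<Omega> unfolding \<Omega>_def by (rule prob_space_pair) unfold_locales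
  define G where "G = (\<lambda>(x::real, (t::real, y::real)). (x, if t \<le> w x then \<psi> x else y))"
  have G[measurable]: "G \<in> \<Omega> \<rightarrow>\<^sub>M borel \<Otimes>\<^sub>M borel"
    unfolding G_def \<Omega>_def by measurable
  define K where "K = distr \<Omega> (borel \<Otimes>\<^sub>M borel) G"
  have sK[measurable_cong]: "sets K = sets (borel \<Otimes>\<^sub>M borel)" unfolding K_def by simp
  interpret K: prob_space K unfolding K_def by (rule \<Omega>.prob_space_distr) (rule G)
  have formula: "emeasure K X = (\<integral>\<^sup>+x. ennreal (w x) * indicator X (x, \<psi> x) + ennreal (1 - w x) * emeasure \<nu> (Pair x -` X) \<partial>U)"
    if X[measurable]: "X \<in> sets (borel \<Otimes>\<^sub>M borel)" for X
  proof -
    have "emeasure K X = (\<integral>\<^sup>+z. indicator X z \<partial>K)"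
      by (rule nn_integral_indicator[symmetric]) (simp add: sK)
    also have "\<dots> = (\<integral>\<^sup>+\<omega>. indicator X (G \<omega>) \<partial>\<Omega>)"
      unfolding K_def by (rule nn_integral_distr) auto
    also have "\<dots> = (\<integral>\<^sup>+x. \<integral>\<^sup>+ty. indicator X (G (x, ty)) \<partial>(T \<Otimes>\<^sub>M \<nu>) \<partial>U)"
      unfolding \<Omega>_def by (rule TN.nn_integral_fst[symmetric]) (fold \<Omega>_def, measurable)
    also have "\<dots> = (\<integral>\<^sup>+x. \<integral>\<^sup>+t. \<integral>\<^sup>+y. indicator X (G (x, (t, y))) \<partial>\<nu> \<partial>T \<partial>U)"
    proof (intro nn_integral_cong)
      fix x
      have Gx: "(\<lambda>ty. G (x, ty)) \<in> (T \<Otimes>\<^sub>M \<nu>) \<rightarrow>\<^sub>M borel \<Otimes>\<^sub>M borel"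
        using measurable_Pair2[OF G[unfolded \<Omega>_def]] by simp
      have "(\<lambda>ty. indicator X (G (x, ty)) :: ennreal) \<in> borel_measurable (T \<Otimes>\<^sub>M \<nu>)"
        by (rule measurable_compose[OF Gx]) simp
      from \<nu>.nn_integral_fst[OF this] show "(\<integral>\<^sup>+ty. indicator X (G (x, ty)) \<partial>(T \<Otimes>\<^sub>M \<nu>)) = (\<integral>\<^sup>+t. \<integral>\<^sup>+y. indicator X (G (x, (t, y))) \<partial>\<nu> \<partial>T)"
        by simp
    qed
    also have "\<dots> = (\<integral>\<^sup>+x. \<integral>\<^sup>+t. (if t \<le> w x then indicator X (x, \<psi> x) else emeasure \<nu> (Pair x -` X)) \<partial>T \<partial>U)"
    proof (intro nn_integral_cong)
      fix x t
      show "(\<integral>\<^sup>+y. indicator X (G (x, (t, y))) \<partial>\<nu>) = (if t \<le> w x then indicator X (x, \<psi> x) else emeasure \<nu> (Pair x -` X))"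
      proof (cases "t \<le> w x")
        case True
        then show ?thesis by (simp add: G_def \<nu>.emeasure_space_1[simplified])
      next
        case False
        have "(\<integral>\<^sup>+y. indicator X (G (x, (t, y))) \<partial>\<nu>) = (\<integral>\<^sup>+y. indicator (Pair x -` X) y \<partial>\<nu>)"
          using False by (intro nn_integral_cong) (simp add: G_def split: split_indicator)
        also have "\<dots> = emeasure \<nu> (Pair x -` X)"
          by (rule nn_integral_indicator) (simp add: sets_Pair1[OF X, simplified])
        finally show ?thesis using False by simp
      qed
    qed
    also have "\<dots> = (\<integral>\<^sup>+x. ennreal (w x) * indicator X (x, \<psi> x) + ennreal (1 - w x) * emeasure \<nu> (Pair x -` X) \<partial>U)"
      by (intro nn_integral_cong) (simp add: T_def nn_integral_T w01 mult.commute)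
    finally show ?thesis .
  qed
  have spK[simp]: "space K = UNIV" unfolding K_def by (simp add: space_pair_measure)
  have m1: "distr K borel fst = U"
  proof (rule measure_eqI)
    fix Y assume "Y \<in> sets (distr K borel fst)"
    then have Y[measurable]: "Y \<in> sets borel" by simp
    have "emeasure (distr K borel fst) Y = emeasure K (Y \<times> UNIV)"
      by (subst emeasure_distr) (auto simp: sK intro!: arg_cong2[where f=emeasure])
    also have "\<dots> = (\<integral>\<^sup>+x. ennreal (w x) * indicator Y x + ennreal (1 - w x) * indicator Y x \<partial>U)"
      by (subst formula) (auto intro!: nn_integral_cong simp: \<nu>.emeasure_space_1[simplified] split: split_indicator)
    also have "\<dots> = (\<integral>\<^sup>+x. indicator Y x \<partial>U)"
      using w01 by (intro nn_integral_cong) (auto split: split_indicator simp: ennreal_plus[symmetric] simp del: ennreal_plus)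
    also have "\<dots> = emeasure U Y" by (rule nn_integral_indicator) simp
    finally show "emeasure (distr K borel fst) Y = emeasure U Y" .
  qed simp
  have m2: "distr K borel snd = U"
  proof (rule measure_eqI)
    fix Y assume "Y \<in> sets (distr K borel snd)"
    then have Y[measurable]: "Y \<in> sets borel" by simp
    have "emeasure (distr K borel snd) Y = emeasure K (UNIV \<times> Y)"
      by (subst emeasure_distr) (auto simp: sK intro!: arg_cong2[where f=emeasure])
    also have "\<dots> = (\<integral>\<^sup>+x. ennreal (w x) * indicator Y (\<psi> x) + ennreal (1 - w x) * emeasure \<nu> Y \<partial>U)"
      by (subst formula) (auto intro!: nn_integral_cong split: split_indicator)
    also have "\<dots> = (\<integral>\<^sup>+x. ennreal (w x) * indicator Y (\<psi> x) \<partial>U) + (\<integral>\<^sup>+x. ennreal (1 - w x) \<partial>U) * emeasure \<nu> Y"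
      by (subst nn_integral_add) (auto simp: nn_integral_multc)
    also have "\<dots> = (\<integral>\<^sup>+y. ennreal (k y) * indicator Y y \<partial>U) + (\<integral>\<^sup>+y. ennreal (1 - k y) * indicator Y y \<partial>U)"
      using R0 Rfin by (simp add: ident RW em\<nu> ennreal_times_divide mult_divide_eq_ennreal mult.commute[of R])
    also have "\<dots> = (\<integral>\<^sup>+y. ennreal (k y) * indicator Y y + ennreal (1 - k y) * indicator Y y \<partial>U)"
      by (subst nn_integral_add) auto
    also have "\<dots> = (\<integral>\<^sup>+x. indicator Y x \<partial>U)"
      using k01 by (intro nn_integral_cong) (auto split: split_indicator simp: ennreal_plus[symmetric] simp del: ennreal_plus)
    also have "\<dots> = emeasure U Y" by (rule nn_integral_indicator) simp
    finally show "emeasure (distr K borel snd) Y = emeasure U Y" .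
  qed simp
  have ev: "\<forall>E\<in>sets (borel \<Otimes>\<^sub>M borel). emeasure K E \<ge> (\<integral>\<^sup>+x. ennreal (w x) * indicator E (x, \<psi> x) \<partial>U)"
    by (auto simp: formula intro!: nn_integral_mono)
  have AEI: "AE x in U. x \<in> I"
    unfolding U_def by (rule AE_uniform_measureI) auto
  have nuI: "emeasure \<nu> (- I) = 0"
  proof -
    have "(\<integral>\<^sup>+y. ennreal (1 - k y) * indicator (- I) y \<partial>U) = 0"
      using AEI by (subst nn_integral_0_iff_AE) (auto elim!: eventually_mono)
    then show ?thesis by (simp add: em\<nu>)
  qed
  have ae: "AE z in K. fst z \<in> I \<and> snd z \<in> I"
  proof -
    let ?N = "UNIV - I \<times> I"
    have N[measurable]: "?N \<in> sets (borel \<Otimes>\<^sub>M borel)"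
      using sets.compl_sets[OF pair_measureI[OF I I]] by (simp add: space_pair_measure)
    have "emeasure K ?N = 0"
    proof -
      have "emeasure K ?N = (\<integral>\<^sup>+x. ennreal (w x) * indicator ?N (x, \<psi> x) + ennreal (1 - w x) * emeasure \<nu> (Pair x -` ?N) \<partial>U)"
        by (rule formula) simp
      also have "\<dots> = (\<integral>\<^sup>+x. 0 \<partial>U)"
      proof (rule nn_integral_cong_AE)
        show "AE x in U. ennreal (w x) * indicator ?N (x, \<psi> x) + ennreal (1 - w x) * emeasure \<nu> (Pair x -` ?N) = 0"
          using AEI
        proof (rule eventually_mono)
          fix x assume x: "x \<in> I"
          then have "Pair x -` ?N = - I" by auto
          then show "ennreal (w x) * indicator ?N (x, \<psi> x) + ennreal (1 - w x) * emeasure \<nu> (Pair x -` ?N) = 0"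
            using x psiI[OF x] nuI by simp
        qed
      qed
      also have "\<dots> = 0" by simp
      finally show ?thesis .
    qed
    note N0 = this
    have eqN: "{z \<in> space K. \<not> (fst z \<in> I \<and> snd z \<in> I)} = ?N" by auto
    have NK: "?N \<in> sets K" using N by (simp add: sK)
    show ?thesis using AE_iff_measurable[OF NK eqN] N0 by simp
  qed
  show ?thesis by (intro exI[of _ K] conjI K.prob_space_axioms sK m1 m2 ev ae)
qed



definition rho :: "nat \<Rightarrow> real \<Rightarrow> real" where
  "rho j x = (if j = 0 then x else if j = 1 then pi - x else if j = 2 then pi + x else 2*pi - x)"

lemma rho_measurable[measurable]: "(\<lambda>(j, x). rho j x) \<in> measurable (count_space UNIV \<Otimes>\<^sub>M borel) borel"
  unfolding rho_def by measurable

lemma rho_j_measurable[measurable]: "(\<lambda>x. rho j x) \<in> borel_measurable borel"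
  unfolding rho_def by measurable

lemma lborel_pm1:
  fixes t c :: real
  assumes "c = 1 \<or> c = -1" and S: "S \<in> sets borel"
  shows "emeasure lborel ((\<lambda>x. t + c * x) -` S) = emeasure lborel S"
proof -
  have c: "c \<noteq> 0" "\<bar>c\<bar> = 1" using assms by auto
  have "lborel = distr lborel borel (\<lambda>x. t + c * x)"
    using lborel_real_affine[OF c(1), of t] c(2) by (simp add: density_1)
  then have "emeasure lborel S = emeasure (distr lborel borel (\<lambda>x. t + c * x)) S" by simp
  also have "\<dots> = emeasure lborel ((\<lambda>x. t + c * x) -` S)"
    using S by (subst emeasure_distr) auto
  finally show ?thesis by simp
qed

lemma lborel_split:
  fixes a b c :: real
  assumes "a \<le> b" "b \<le> c" and Y[measurable]: "Y \<in> sets borel"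
  shows "emeasure lborel ({a..b} \<inter> Y) + emeasure lborel ({b..c} \<inter> Y) = emeasure lborel ({a..c} \<inter> Y)"
proof -
  have "emeasure lborel ({b..c} \<inter> Y) = emeasure lborel ({b<..c} \<inter> Y)"
  proof -
    have "{b..c} \<inter> Y \<subseteq> ({b<..c} \<inter> Y) \<union> {b}" by auto
    then have "emeasure lborel ({b..c} \<inter> Y) \<le> emeasure lborel ({b<..c} \<inter> Y)"
      using emeasure_subadditive[of "{b<..c} \<inter> Y" lborel "{b}"] emeasure_mono[of "{b..c} \<inter> Y" "({b<..c} \<inter> Y) \<union> {b}" lborel]
      by auto
    moreover have "emeasure lborel ({b<..c} \<inter> Y) \<le> emeasure lborel ({b..c} \<inter> Y)"
      by (rule emeasure_mono) auto
    ultimately show ?thesis by simp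
  qed
  also have "emeasure lborel ({a..b} \<inter> Y) + \<dots> = emeasure lborel (({a..b} \<inter> Y) \<union> ({b<..c} \<inter> Y))"
    by (rule plus_emeasure) auto
  also have "({a..b} \<inter> Y) \<union> ({b<..c} \<inter> Y) = {a..c} \<inter> Y" using assms by auto
  finally show ?thesis .
qed

lemma rho_pre:
  fixes Y :: "real set"
  assumes Y[measurable]: "Y \<in> sets borel"
  shows "emeasure lborel ({0..pi/2} \<inter> rho 0 -` Y) = emeasure lborel ({0..pi/2} \<inter> Y)"
    and "emeasure lborel ({0..pi/2} \<inter> rho (Suc 0) -` Y) = emeasure lborel ({pi/2..pi} \<inter> Y)"
    and "emeasure lborel ({0..pi/2} \<inter> rho 2 -` Y) = emeasure lborel ({pi..3*pi/2} \<inter> Y)"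
    and "emeasure lborel ({0..pi/2} \<inter> rho 3 -` Y) = emeasure lborel ({3*pi/2..2*pi} \<inter> Y)"
proof -
  show "emeasure lborel ({0..pi/2} \<inter> rho 0 -` Y) = emeasure lborel ({0..pi/2} \<inter> Y)"
    by (simp add: rho_def vimage_def)
  have e1: "{0..pi/2} \<inter> rho (Suc 0) -` Y = (\<lambda>x. pi + (-1) * x) -` ({pi/2..pi} \<inter> Y)"
    by (auto simp: rho_def)
  show "emeasure lborel ({0..pi/2} \<inter> rho (Suc 0) -` Y) = emeasure lborel ({pi/2..pi} \<inter> Y)"
    unfolding e1 by (rule lborel_pm1) auto
  have e2: "{0..pi/2} \<inter> rho 2 -` Y = (\<lambda>x. pi + 1 * x) -` ({pi..3*pi/2} \<inter> Y)"
    by (auto simp: rho_def)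
  show "emeasure lborel ({0..pi/2} \<inter> rho 2 -` Y) = emeasure lborel ({pi..3*pi/2} \<inter> Y)"
    unfolding e2 by (rule lborel_pm1) auto
  have e3: "{0..pi/2} \<inter> rho 3 -` Y = (\<lambda>x. 2*pi + (-1) * x) -` ({3*pi/2..2*pi} \<inter> Y)"
    by (auto simp: rho_def)
  show "emeasure lborel ({0..pi/2} \<inter> rho 3 -` Y) = emeasure lborel ({3*pi/2..2*pi} \<inter> Y)"
    unfolding e3 by (rule lborel_pm1) auto
qed

lemma quad_sum:
  fixes Y :: "real set"
  assumes Y[measurable]: "Y \<in> sets borel"
  shows "(\<Sum>j\<in>{0,1,2,3}. emeasure lborel ({0..pi/2} \<inter> rho j -` Y)) = emeasure lborel ({0..<2*pi} \<inter> Y)"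
proof -
  have "(\<Sum>j\<in>{0,1,2,3}. emeasure lborel ({0..pi/2} \<inter> rho j -` Y)) =
     emeasure lborel ({0..pi/2} \<inter> Y) + emeasure lborel ({pi/2..pi} \<inter> Y) + emeasure lborel ({pi..3*pi/2} \<inter> Y) + emeasure lborel ({3*pi/2..2*pi} \<inter> Y)"
    by (simp add: rho_pre[OF Y] add.assoc)
  also have "\<dots> = emeasure lborel ({0..2*pi} \<inter> Y)"
    using pi_gt_zero by (simp add: lborel_split)
  also have "\<dots> = emeasure lborel ({0..<2*pi} \<inter> Y)"
  proof -
    have "emeasure lborel ({0..2*pi} \<inter> Y) \<le> emeasure lborel (({0..<2*pi} \<inter> Y) \<union> {2*pi})"
      by (rule emeasure_mono) auto
    also have "\<dots> \<le> emeasure lborel ({0..<2*pi} \<inter> Y) + emeasure lborel {2*pi}"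
      by (rule emeasure_subadditive) auto
    finally have "emeasure lborel ({0..2*pi} \<inter> Y) \<le> emeasure lborel ({0..<2*pi} \<inter> Y)" by simp
    moreover have "emeasure lborel ({0..<2*pi} \<inter> Y) \<le> emeasure lborel ({0..2*pi} \<inter> Y)"
      by (rule emeasure_mono) auto
    ultimately show ?thesis by simp
  qed
  finally show ?thesis .
qed

lemma rho_trig:
  shows "cos (rho j x) * cos (rho j y) = cos x * cos y"
    and "sin (rho j x) * sin (rho j y) = sin x * sin y"
    and "cos (rho j x) ^ 2 = cos x ^ 2"
  by (auto simp: rho_def cos_diff sin_diff cos_add sin_add power2_eq_square)

lemma lift:
  fixes K :: "(real \<times> real) measure"
  defines "UQ \<equiv> uniform_measure lborel {0..pi/2}" and "UC \<equiv> uniform_measure lborel {0..<2*pi}"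
  assumes pK: "prob_space K" and sK[measurable_cong]: "sets K = sets (borel \<Otimes>\<^sub>M borel)"
    and m1: "distr K borel fst = UQ" and m2: "distr K borel snd = UQ"
    and ae: "AE z in K. fst z \<in> {0..pi/2} \<and> snd z \<in> {0..pi/2}"
  shows "\<exists>M. prob_space M \<and> sets M = sets (borel \<Otimes>\<^sub>M borel) \<and> distr M borel fst = UC \<and> distr M borel snd = UC
    \<and> (\<forall>E\<in>sets (borel \<Otimes>\<^sub>M borel). (\<forall>j x y. (rho j x, rho j y) \<in> E \<longleftrightarrow> (x, y) \<in> E) \<longrightarrow> emeasure M E = emeasure K E)
    \<and> (AE z in M. cos (fst z) * cos (snd z) \<ge> 0 \<and> sin (fst z) * sin (snd z) \<ge> 0)"
proof -
  interpret K: prob_space K by (rule pK)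
  define P4 where "P4 = measure_pmf (pmf_of_set {0,1,2,3::nat})"
  interpret P4: prob_space P4 unfolding P4_def by (rule prob_space_measure_pmf)
  have sP4[measurable_cong]: "sets P4 = sets (count_space UNIV)" unfolding P4_def by simp
  have intP4: "\<And>f. (\<integral>\<^sup>+j. f j \<partial>P4) = (\<Sum>j\<in>{0,1,2,3}. f j) / 4"
    unfolding P4_def by (subst nn_integral_pmf_of_set) auto
  define \<Omega> where "\<Omega> = K \<Otimes>\<^sub>M P4"
  interpret \<Omega>: prob_space \<Omega> unfolding \<Omega>_def by (rule prob_space_pair) unfold_locales
  define F where "F = (\<lambda>(z::real\<times>real, j::nat). (rho j (fst z), rho j (snd z)))"
  have F[measurable]: "F \<in> \<Omega> \<rightarrow>\<^sub>M borel \<Otimes>\<^sub>M borel"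
  proof -
    have r: "(\<lambda>\<omega>. rho (snd \<omega>) (p (fst \<omega>))) \<in> \<Omega> \<rightarrow>\<^sub>M borel" if [measurable]: "p \<in> K \<rightarrow>\<^sub>M borel" for p
    proof -
      have "(\<lambda>\<omega>::(real\<times>real)\<times>nat. (snd \<omega>, p (fst \<omega>))) \<in> \<Omega> \<rightarrow>\<^sub>M count_space UNIV \<Otimes>\<^sub>M borel"
        unfolding \<Omega>_def by measurable
      from measurable_compose[OF this rho_measurable] show ?thesis by simp
    qed
    show ?thesis unfolding F_def
      using r[of fst] r[of snd] by (auto simp: split_beta' intro!: measurable_Pair)
  qed
  define M where "M = distr \<Omega> (borel \<Otimes>\<^sub>M borel) F"
  have sM[measurable_cong]: "sets M = sets (borel \<Otimes>\<^sub>M borel)" unfolding M_def by simp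
  interpret M: prob_space M unfolding M_def by (rule \<Omega>.prob_space_distr) (rule F)
  have formula: "emeasure M X = (\<integral>\<^sup>+z. (\<Sum>j\<in>{0,1,2,3}. indicator X (rho j (fst z), rho j (snd z))) / 4 \<partial>K)"
    if X[measurable]: "X \<in> sets (borel \<Otimes>\<^sub>M borel)" for X
  proof -
    have "emeasure M X = (\<integral>\<^sup>+z. indicator X z \<partial>M)"
      by (rule nn_integral_indicator[symmetric]) (simp add: sM)
    also have "\<dots> = (\<integral>\<^sup>+\<omega>. indicator X (F \<omega>) \<partial>\<Omega>)"
      unfolding M_def by (rule nn_integral_distr) auto
    also have "\<dots> = (\<integral>\<^sup>+z. \<integral>\<^sup>+j. indicator X (F (z, j)) \<partial>P4 \<partial>K)"
      unfolding \<Omega>_def by (rule P4.nn_integral_fst[symmetric]) (fold \<Omega>_def, measurable)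
    also have "\<dots> = (\<integral>\<^sup>+z. (\<Sum>j\<in>{0,1,2,3}. indicator X (rho j (fst z), rho j (snd z))) / 4 \<partial>K)"
      by (simp add: intP4 F_def)
    finally show ?thesis .
  qed
  have spM[simp]: "space M = UNIV" unfolding M_def by (simp add: space_pair_measure)
  have marg: "(\<integral>\<^sup>+z. (\<Sum>j\<in>{0,1,2,3}. indicator Y (rho j (p z))) / 4 \<partial>K) = emeasure UC Y"
    if p[measurable]: "p \<in> K \<rightarrow>\<^sub>M borel" and pd: "distr K borel p = UQ" and Y[measurable]: "Y \<in> sets borel" for p Y
  proof -
    have each: "(\<integral>\<^sup>+z. indicator Y (rho j (p z)) \<partial>K) = emeasure lborel ({0..pi/2} \<inter> rho j -` Y) / ennreal (pi/2)" for j
    proof -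
      have rj[measurable]: "rho j \<in> borel_measurable borel"
        using measurable_Pair2[OF rho_measurable, of j] by (simp add: split_beta')
      have pre[measurable]: "rho j -` Y \<in> sets borel" using measurable_sets_borel[OF rj Y] .
      have "(\<integral>\<^sup>+z. indicator Y (rho j (p z)) \<partial>K) = (\<integral>\<^sup>+x. indicator Y (rho j x) \<partial>distr K borel p)"
        by (rule nn_integral_distr[symmetric]) auto
      also have "\<dots> = (\<integral>\<^sup>+x. indicator (rho j -` Y) x \<partial>UQ)" unfolding pd
        by (intro nn_integral_cong) (simp split: split_indicator)
      also have "\<dots> = emeasure UQ (rho j -` Y)"
        by (rule nn_integral_indicator) (simp add: UQ_def)
      also have "\<dots> = emeasure lborel ({0..pi/2} \<inter> rho j -` Y) / ennreal (pi/2)"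
        unfolding UQ_def by (subst emeasure_uniform_measure) auto
      finally show ?thesis .
    qed
    have "(\<integral>\<^sup>+z. (\<Sum>j\<in>{0,1,2,3}. indicator Y (rho j (p z))) / 4 \<partial>K)
        = (\<Sum>j\<in>{0,1,2,3}. (\<integral>\<^sup>+z. indicator Y (rho j (p z)) \<partial>K)) / 4"
      by (subst nn_integral_divide, measurable, subst nn_integral_sum, measurable)
    also have "\<dots> = (\<Sum>j\<in>{0,1,2,3}. emeasure lborel ({0..pi/2} \<inter> rho j -` Y)) / ennreal (pi/2) / 4"
      by (simp only: each) (simp add: divide_ennreal_def distrib_right)
    also have "\<dots> = emeasure lborel ({0..<2*pi} \<inter> Y) / ennreal (pi/2) / 4"
      by (simp only: quad_sum[OF Y])
    also have "\<dots> = emeasure lborel ({0..<2*pi} \<inter> Y) / ennreal (2 * pi)"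
    proof -
      have "inverse (ennreal (pi/2)) * inverse 4 = inverse (ennreal (2*pi))"
      proof -
        have i4: "inverse (4::ennreal) = ennreal (inverse 4)"
          using inverse_ennreal[of "4::real"] by simp
        have "inverse (ennreal (pi/2)) * inverse 4 = ennreal (inverse (pi/2)) * ennreal (inverse 4)"
          by (simp only: i4) (simp add: inverse_ennreal)
        also have "\<dots> = ennreal (inverse (pi/2) * inverse 4)" by (rule ennreal_mult[symmetric]) auto
        also have "inverse (pi/2) * inverse 4 = inverse (2*pi)" by (simp add: field_simps)
        also have "ennreal (inverse (2*pi)) = inverse (ennreal (2*pi))" by (simp add: inverse_ennreal)
        finally show ?thesis by simp
      qed
      then show ?thesis by (simp add: divide_ennreal_def mult.assoc)
    qed
    also have "\<dots> = emeasure UC Y"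
      unfolding UC_def by (subst emeasure_uniform_measure) auto
    finally show ?thesis .
  qed
  have mf: "distr M borel fst = UC"
  proof (rule measure_eqI)
    fix Y assume "Y \<in> sets (distr M borel fst)"
    then have Y[measurable]: "Y \<in> sets borel" by simp
    have "emeasure (distr M borel fst) Y = emeasure M (Y \<times> UNIV)"
      by (subst emeasure_distr) (auto intro!: arg_cong2[where f=emeasure])
    also have "\<dots> = (\<integral>\<^sup>+z. (\<Sum>j\<in>{0,1,2,3}. indicator Y (rho j (fst z))) / 4 \<partial>K)"
      by (subst formula) (auto intro!: nn_integral_cong simp: indicator_def)
    also have "\<dots> = emeasure UC Y" by (rule marg) (auto simp: m1)
    finally show "emeasure (distr M borel fst) Y = emeasure UC Y" .
  qed (simp add: UC_def)
  have ms: "distr M borel snd = UC"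
  proof (rule measure_eqI)
    fix Y assume "Y \<in> sets (distr M borel snd)"
    then have Y[measurable]: "Y \<in> sets borel" by simp
    have "emeasure (distr M borel snd) Y = emeasure M (UNIV \<times> Y)"
      by (subst emeasure_distr) (auto intro!: arg_cong2[where f=emeasure])
    also have "\<dots> = (\<integral>\<^sup>+z. (\<Sum>j\<in>{0,1,2,3}. indicator Y (rho j (snd z))) / 4 \<partial>K)"
      by (subst formula) (auto intro!: nn_integral_cong simp: indicator_def)
    also have "\<dots> = emeasure UC Y" by (rule marg) (auto simp: m2)
    finally show "emeasure (distr M borel snd) Y = emeasure UC Y" .
  qed (simp add: UC_def)
  have inv: "\<forall>E\<in>sets (borel \<Otimes>\<^sub>M borel). (\<forall>j x y. (rho j x, rho j y) \<in> E \<longleftrightarrow> (x, y) \<in> E) \<longrightarrow> emeasure M E = emeasure K E"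
  proof (intro ballI impI)
    fix E assume E[measurable]: "E \<in> sets (borel \<Otimes>\<^sub>M borel)" and i: "\<forall>j x y. (rho j x, rho j y) \<in> E \<longleftrightarrow> (x, y) \<in> E"
    have "emeasure M E = (\<integral>\<^sup>+z. (\<Sum>j\<in>{0,1,2,3}. indicator E (rho j (fst z), rho j (snd z))) / 4 \<partial>K)"
      by (rule formula) fact
    also have "\<dots> = (\<integral>\<^sup>+z. indicator E z \<partial>K)"
    proof (rule nn_integral_cong)
      fix z :: "real \<times> real"
      have "\<And>j. indicator E (rho j (fst z), rho j (snd z)) = (indicator E z :: ennreal)"
        using i by (simp add: indicator_def)
      then have "(\<Sum>j\<in>{0,1,2,3}. indicator E (rho j (fst z), rho j (snd z))) = (indicator E z :: ennreal) * 4"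
        by (simp add: mult.commute)
      then show "(\<Sum>j\<in>{0,1,2,3}. indicator E (rho j (fst z), rho j (snd z))) / 4 = (indicator E z :: ennreal)"
        by (simp add: mult_divide_eq_ennreal)
    qed
    also have "\<dots> = emeasure K E" by (rule nn_integral_indicator) (simp add: sK)
    finally show "emeasure M E = emeasure K E" .
  qed
  have aeM: "AE z in M. cos (fst z) * cos (snd z) \<ge> 0 \<and> sin (fst z) * sin (snd z) \<ge> 0"
  proof -
    have "AE z in distr \<Omega> K fst. fst z \<in> {0..pi/2} \<and> snd z \<in> {0..pi/2}"
      unfolding \<Omega>_def P4.distr_pair_fst by (rule ae)
    then have "AE \<omega> in \<Omega>. fst (fst \<omega>) \<in> {0..pi/2} \<and> snd (fst \<omega>) \<in> {0..pi/2}"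
      by (subst (asm) AE_distr_iff) (auto simp: \<Omega>_def)
    then have "AE \<omega> in \<Omega>. cos (fst (F \<omega>)) * cos (snd (F \<omega>)) \<ge> 0 \<and> sin (fst (F \<omega>)) * sin (snd (F \<omega>)) \<ge> 0"
    proof (rule eventually_mono)
      fix \<omega> :: "(real \<times> real) \<times> nat"
      assume a: "fst (fst \<omega>) \<in> {0..pi/2} \<and> snd (fst \<omega>) \<in> {0..pi/2}"
      obtain x y j where o: "\<omega> = ((x, y), j)" by (metis prod.collapse)
      have "cos x \<ge> 0" "cos y \<ge> 0" "sin x \<ge> 0" "sin y \<ge> 0"
        using a o by (auto intro!: cos_ge_zero sin_ge_zero)
      then show "cos (fst (F \<omega>)) * cos (snd (F \<omega>)) \<ge> 0 \<and> sin (fst (F \<omega>)) * sin (snd (F \<omega>)) \<ge> 0"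
        by (simp add: o F_def rho_trig)
    qed
    then show ?thesis
      unfolding M_def by (subst AE_distr_iff) auto
  qed
  show ?thesis by (intro exI[of _ M] conjI M.prob_space_axioms sM mf ms inv aeM)
qed



lemma sin_ge_half:
  fixes s :: real
  assumes "0 \<le> s" "s \<le> pi/2"
  shows "s / 2 \<le> sin s"
proof (cases "s \<le> pi/3")
  case True
  have "(\<lambda>t. sin t - t/2) 0 \<le> (\<lambda>t. sin t - t/2) s"
  proof (rule DERIV_nonneg_imp_nondecreasing[OF assms(1)])
    fix x assume x: "0 \<le> x" "x \<le> s"
    have "cos (pi/3) \<le> cos x"
      using x True by (intro cos_monotone_0_pi_le) auto
    then have "0 \<le> cos x - 1/2" by (simp add: cos_60)
    moreover have "DERIV (\<lambda>t. sin t - t/2) x :> cos x - 1/2"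
      by (auto intro!: derivative_eq_intros)
    ultimately show "\<exists>y. DERIV (\<lambda>t. sin t - t/2) x :> y \<and> y \<ge> 0" by blast
  qed
  then show ?thesis by simp
next
  case False
  have "sin (pi/3) \<le> sin s"
    using False assms by (intro sin_monotone_2pi_le) auto
  moreover have "s/2 \<le> sqrt 3 / 2"
  proof -
    have "1.72 \<le> sqrt 3" by (rule real_le_rsqrt) (simp add: power2_eq_square)
    moreover have "s/2 \<le> pi/4" using assms by simp
    moreover have "pi \<le> 3.2" using pi_approx by simp
    ultimately show ?thesis by simp
  qed
  ultimately show ?thesis by (simp add: sin_60)
qed

lemma cos_diff_sq:
  fixes u v :: real
  assumes "0 \<le> u" "u \<le> pi" "0 \<le> v" "v \<le> pi"
  shows "(u - v)^2 \<le> 8 * \<bar>cos u - cos v\<bar>"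
proof -
  { fix u v :: real assume uv: "0 \<le> v" "v \<le> u" "u \<le> pi"
    define d where "d = u - v"
    have d: "0 \<le> d" "d \<le> pi" using uv by (auto simp: d_def)
    have e: "cos v - cos u = 2 * sin ((v + u)/2) * sin (d/2)"
      unfolding d_def by (rule cos_diff_cos)
    have s1: "sin (d/2) \<le> sin ((v + u)/2)"
    proof (cases "(v + u)/2 \<le> pi/2")
      case True
      then show ?thesis using uv d by (intro sin_monotone_2pi_le) (auto simp: d_def)
    next
      case False
      have "sin (d/2) \<le> sin (pi - (v + u)/2)"
        using uv d False by (intro sin_monotone_2pi_le) (auto simp: d_def field_simps)
      then show ?thesis by simp
    qed
    have s0: "d/4 \<le> sin (d/2)"
      using sin_ge_half[of "d/2"] d by simp
    have "0 \<le> d/4" using d by simp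
    then have "(d/4) * (d/4) \<le> sin (d/2) * sin ((v+u)/2)"
      using s0 s1 by (intro mult_mono) auto
    then have "d^2 \<le> 8 * (cos v - cos u)"
      using e by (simp add: power2_eq_square algebra_simps)
    moreover have "cos v - cos u \<le> \<bar>cos u - cos v\<bar>" by simp
    ultimately have "(u - v)^2 \<le> 8 * \<bar>cos u - cos v\<bar>" unfolding d_def by (smt (verit))
  } note * = this
  show ?thesis
  proof (cases "v \<le> u")
    case True then show ?thesis using * assms by blast
  next
    case False then show ?thesis using *[of u v] assms by (simp add: power2_commute abs_minus_commute)
  qed
qed

definition acl :: "real \<Rightarrow> real" where "acl t = arccos (max (-1) (min 1 t))"

lemma acl_eq: "-1 \<le> t \<Longrightarrow> t \<le> 1 \<Longrightarrow> acl t = arccos t"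
  by (simp add: acl_def)

lemma continuous_acl: "continuous_on UNIV acl"
proof -
  have "continuous_on UNIV (\<lambda>t::real. max (-1) (min 1 t))" by (intro continuous_intros)
  moreover have "continuous_on {-1..1} arccos" by (rule continuous_on_arccos')
  ultimately show ?thesis unfolding acl_def
    by (intro continuous_on_compose2[of "{-1..1}" arccos UNIV "\<lambda>t. max (-1) (min 1 t)"]) auto
qed

lemma acl_measurable[measurable]: "acl \<in> borel_measurable borel"
  using continuous_acl by (rule borel_measurable_continuous_onI)

lemma acl_bounded: "0 \<le> acl t \<and> acl t \<le> pi"
  unfolding acl_def by (rule arccos_bounded) auto

lemma DERIV_acl: "-1 < t \<Longrightarrow> t < 1 \<Longrightarrow> DERIV acl t :> inverse (- sqrt (1 - t\<^sup>2))"
  by (rule has_field_derivative_transform_within_open[OF DERIV_arccos, of _ "{-1<..<1}"]) (auto simp: acl_def)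

locale ana =
  fixes \<beta> \<gamma> \<delta> \<eta> :: real
  assumes dpos: "0 < \<delta>" and dsmall: "\<delta> \<le> 1/256" and b1: "\<bar>\<beta> - 1\<bar> \<le> \<delta>" and g1: "\<bar>\<gamma>\<bar> \<le> \<delta>"
    and eta0: "0 < \<eta>" and eta1: "\<eta> < 1"
begin

definition "a = arcsin (sqrt \<delta>)"
definition "b = pi/2 - a"
definition "z x = \<gamma> + \<beta> * cos (2*x)"
definition "psi0 x = acl (z x) / 2"
definition "dpsi x = \<beta> * sin (2*x) / sqrt (1 - (z x)^2)"
definition "psi x = (if x \<in> {a..b} then psi0 x else x)"
definition "psiinv y = acl ((cos (2*y) - \<gamma>) / \<beta>) / 2"
definition "w x = (1 - \<eta>) * max 0 (min 1 (dpsi x)) * indicator {a..b} x"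
definition "k y = (1 - \<eta>) * max 0 (min 1 (1 / dpsi (psiinv y))) * indicator {psi0 a..psi0 b} y"

lemma beta_pos: "15/16 \<le> \<beta>" "\<beta> \<le> 17/16"
  using b1 dsmall by auto

lemma sqd: "0 < sqrt \<delta>" "sqrt \<delta> \<le> 1/16"
proof -
  show "0 < sqrt \<delta>" using dpos by simp
  have "sqrt \<delta> \<le> sqrt (1/256)" using dsmall by (rule real_sqrt_le_mono)
  also have "sqrt (1/256) = (1/16::real)" by (simp add: real_sqrt_divide)
  finally show "sqrt \<delta> \<le> 1/16" .
qed

lemma a_props: "0 < a" "a \<le> 2 * sqrt \<delta>" "sin a = sqrt \<delta>" "cos (2*a) = 1 - 2*\<delta>" "a < b" "b < pi/2"
proof -
  have s1: "-1 \<le> sqrt \<delta>" "sqrt \<delta> \<le> 1" using sqd by linarith+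
  have p2: "2 * sqrt \<delta> \<le> pi/2" using sqd pi_ge_two by linarith
  have "sqrt \<delta> \<le> sin (2 * sqrt \<delta>)" using sin_ge_half[of "2 * sqrt \<delta>"] sqd p2 by simp
  moreover have "arcsin (sqrt \<delta>) \<le> 2 * sqrt \<delta> \<longleftrightarrow> sqrt \<delta> \<le> sin (2 * sqrt \<delta>)"
    by (rule arcsin_le_iff; insert s1 p2 sqd pi_ge_two; linarith)
  ultimately show "a \<le> 2 * sqrt \<delta>" unfolding a_def by simp
  have "\<not> sqrt \<delta> \<le> sin 0" using sqd by simp
  moreover have "arcsin (sqrt \<delta>) \<le> 0 \<longleftrightarrow> sqrt \<delta> \<le> sin 0"
    by (rule arcsin_le_iff; insert s1 p2 sqd pi_ge_two; linarith)
  ultimately show "0 < a" unfolding a_def by linarith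
  show sa: "sin a = sqrt \<delta>" unfolding a_def using s1 by simp
  show "cos (2*a) = 1 - 2*\<delta>" using sa dpos by (simp add: cos_double_sin)
  have "a \<le> 1/2" using \<open>a \<le> 2 * sqrt \<delta>\<close> sqd by linarith
  then show "a < b" unfolding b_def using pi_gt3 by linarith
  show "b < pi/2" unfolding b_def using \<open>0 < a\<close> by linarith
qed

lemma x_range: "x \<in> {a..b} \<Longrightarrow> 0 < x \<and> x < pi/2 \<and> 0 < 2*x \<and> 2*x < pi"
  using a_props by auto

lemma cos2x: assumes "x \<in> {a..b}" shows "\<bar>cos (2*x)\<bar> \<le> 1 - 2*\<delta>"
proof -
  have "cos (2*x) \<le> cos (2*a)" using assms a_props by (intro cos_monotone_0_pi_le) auto
  moreover have "cos (2*b) \<le> cos (2*x)" using assms a_props by (intro cos_monotone_0_pi_le) auto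
  moreover have "cos (2*b) = - cos (2*a)" unfolding b_def by (simp add: right_diff_distrib cos_diff)
  ultimately show ?thesis using a_props by auto
qed

lemma zbound: assumes "x \<in> {a..b}" shows "\<bar>z x\<bar> \<le> 1 - 2*\<delta>*\<delta>" "\<bar>z x\<bar> < 1"
proof -
  have c: "\<bar>cos (2*x)\<bar> \<le> 1 - 2*\<delta>" by (rule cos2x[OF assms])
  have "\<bar>\<beta> * cos (2*x)\<bar> = \<beta> * \<bar>cos (2*x)\<bar>" using beta_pos by (simp add: abs_mult)
  also have "\<dots> \<le> (1 + \<delta>) * (1 - 2*\<delta>)"
    using c b1 dsmall beta_pos by (intro mult_mono) auto
  finally have "\<bar>\<beta> * cos (2*x)\<bar> \<le> (1 + \<delta>) * (1 - 2*\<delta>)" .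
  moreover have "(1 + \<delta>) * (1 - 2*\<delta>) = 1 - \<delta> - 2*\<delta>*\<delta>" by (simp add: algebra_simps)
  moreover have "0 \<le> 2*\<delta>*\<delta>" using dpos by simp
  moreover have "\<bar>\<gamma> + \<beta> * cos (2*x)\<bar> \<le> \<bar>\<gamma>\<bar> + \<bar>\<beta> * cos (2*x)\<bar>" by (rule abs_triangle_ineq)
  ultimately show "\<bar>z x\<bar> \<le> 1 - 2*\<delta>*\<delta>" unfolding z_def using g1 by linarith
  moreover have "0 < 2*\<delta>*\<delta>" using dpos by simp
  ultimately show "\<bar>z x\<bar> < 1" by linarith
qed

lemma z_meas[measurable]: "z \<in> borel_measurable borel"
  unfolding z_def[abs_def] by measurable
lemma dpsi_meas[measurable]: "dpsi \<in> borel_measurable borel"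
  unfolding dpsi_def[abs_def] by measurable
lemma psi0_meas[measurable]: "psi0 \<in> borel_measurable borel"
  unfolding psi0_def[abs_def] by measurable
lemma psiinv_meas[measurable]: "psiinv \<in> borel_measurable borel"
  unfolding psiinv_def[abs_def] by measurable
lemma psi_meas[measurable]: "psi \<in> borel_measurable borel"
  unfolding psi_def[abs_def] by measurable
lemma w_meas[measurable]: "w \<in> borel_measurable borel"
  unfolding w_def[abs_def] by measurable
lemma k_meas[measurable]: "k \<in> borel_measurable borel"
  unfolding k_def[abs_def] by measurable

lemma psi0_eq: "x \<in> {a..b} \<Longrightarrow> psi0 x = arccos (z x) / 2"
  using zbound(2)[of x] by (simp add: psi0_def acl_eq)

lemma psi0_range: "0 \<le> psi0 x \<and> psi0 x \<le> pi/2"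
  using acl_bounded[of "z x"] by (simp add: psi0_def)

lemma cos_psi0: "x \<in> {a..b} \<Longrightarrow> cos (2 * psi0 x) = z x"
  using zbound(2)[of x] by (simp add: psi0_eq)

lemma psi0_close: assumes x: "x \<in> {a..b}" shows "\<bar>psi0 x - x\<bar> \<le> 2 * sqrt \<delta>"
proof -
  have "\<bar>cos (2 * psi0 x) - cos (2*x)\<bar> = \<bar>\<gamma> + (\<beta> - 1) * cos (2*x)\<bar>"
    using cos_psi0[OF x] by (simp add: z_def algebra_simps)
  also have "\<dots> \<le> \<bar>\<gamma>\<bar> + \<bar>\<beta> - 1\<bar> * \<bar>cos (2*x)\<bar>"
    by (metis abs_mult abs_triangle_ineq)
  finally have h1: "\<bar>cos (2 * psi0 x) - cos (2*x)\<bar> \<le> \<bar>\<gamma>\<bar> + \<bar>\<beta> - 1\<bar> * \<bar>cos (2*x)\<bar>" .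
  have h2: "\<bar>\<beta> - 1\<bar> * \<bar>cos (2*x)\<bar> \<le> \<bar>\<beta> - 1\<bar> * 1"
    by (intro mult_left_mono) auto
  have c: "\<bar>cos (2 * psi0 x) - cos (2*x)\<bar> \<le> 2 * \<delta>" using h1 h2 b1 g1 by linarith
  have "(2 * psi0 x - 2 * x)^2 \<le> 8 * \<bar>cos (2 * psi0 x) - cos (2*x)\<bar>"
    using psi0_range[of x] x_range[OF x] by (intro cos_diff_sq) auto
  also have "\<dots> \<le> 16 * \<delta>" using c by (smt (verit))
  finally have "sqrt ((2 * psi0 x - 2 * x)^2) \<le> sqrt (16 * \<delta>)" by (rule real_sqrt_le_mono)
  then have "\<bar>2 * psi0 x - 2 * x\<bar> \<le> 4 * sqrt \<delta>" by (simp add: real_sqrt_mult)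
  then show ?thesis by linarith
qed

lemma psi0_mono: assumes "a \<le> x" "x \<le> y" "y \<le> b" shows "psi0 x \<le> psi0 y"
proof -
  have "cos (2*y) \<le> cos (2*x)" using assms x_range[of x] x_range[of y] by (intro cos_monotone_0_pi_le) auto
  then have "z y \<le> z x" unfolding z_def using beta_pos by (intro add_left_mono mult_left_mono) auto
  then have "arccos (z x) \<le> arccos (z y)"
    using zbound(2)[of x] zbound(2)[of y] assms by (intro arccos_le_arccos) auto
  then show ?thesis using assms by (simp add: psi0_eq)
qed

lemma sqrt_pos: "x \<in> {a..b} \<Longrightarrow> 0 < sqrt (1 - (z x)^2)"
  using zbound(2)[of x] by (simp add: abs_square_less_1)

lemma dpsi_pos: "x \<in> {a..b} \<Longrightarrow> 0 < dpsi x"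
  using sqrt_pos[of x] x_range[of x] beta_pos unfolding dpsi_def
  by (intro divide_pos_pos mult_pos_pos sin_gt_zero) auto

lemma psi0_deriv: assumes x: "x \<in> {a..b}" shows "(psi0 has_real_derivative dpsi x) (at x)"
proof -
  have dz: "(z has_real_derivative (- 2 * \<beta> * sin (2*x))) (at x)"
    unfolding z_def[abs_def] by (auto intro!: derivative_eq_intros)
  have da: "DERIV acl (z x) :> inverse (- sqrt (1 - (z x)\<^sup>2))"
    using zbound(2)[OF x] by (intro DERIV_acl) auto
  have "((\<lambda>x. acl (z x)) has_real_derivative inverse (- sqrt (1 - (z x)\<^sup>2)) * (- 2 * \<beta> * sin (2*x))) (at x)"
    by (rule DERIV_chain2[OF da dz])
  then have "((\<lambda>x. acl (z x) / 2) has_real_derivative inverse (- sqrt (1 - (z x)\<^sup>2)) * (- 2 * \<beta> * sin (2*x)) / 2) (at x)"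
    by (rule DERIV_cdivide)
  moreover have "inverse (- sqrt (1 - (z x)\<^sup>2)) * (- 2 * \<beta> * sin (2*x)) / 2 = dpsi x"
    using sqrt_pos[OF x] unfolding dpsi_def by (simp add: field_simps)
  ultimately show ?thesis unfolding psi0_def[abs_def] by simp
qed

lemma dpsi_cont: "continuous_on {a..b} dpsi"
proof -
  have nz: "\<And>x. x \<in> {a..b} \<Longrightarrow> sqrt (1 - (\<gamma> + \<beta> * cos (2 * x))\<^sup>2) \<noteq> 0"
    using sqrt_pos unfolding z_def by (metis less_irrefl)
  show ?thesis unfolding dpsi_def z_def[abs_def]
    using nz by (intro continuous_intros) auto
qed

lemma psiinv_psi0: assumes x: "x \<in> {a..b}" shows "psiinv (psi0 x) = x"
proof -
  have "(cos (2 * psi0 x) - \<gamma>) / \<beta> = cos (2*x)"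
    using cos_psi0[OF x] beta_pos by (simp add: z_def)
  then have "psiinv (psi0 x) = acl (cos (2*x)) / 2" by (simp add: psiinv_def)
  also have "\<dots> = x" using x_range[OF x] by (simp add: acl_eq arccos_cos)
  finally show ?thesis .
qed

lemma dpsi_le1_iff: assumes x: "x \<in> {a..b}"
  shows "dpsi x \<le> 1 \<longleftrightarrow> \<beta>^2 - 1 + \<gamma>^2 + 2*\<gamma>*\<beta>*cos (2*x) \<le> 0"
proof -
  have sp: "0 < sqrt (1 - (z x)^2)" by (rule sqrt_pos[OF x])
  have S: "0 < sin (2*x)" using x_range[OF x] by (intro sin_gt_zero) auto
  have bS: "0 \<le> \<beta> * sin (2*x)" using S beta_pos by simp
  have "dpsi x \<le> 1 \<longleftrightarrow> \<beta> * sin (2*x) \<le> sqrt (1 - (z x)^2)"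
    unfolding dpsi_def using sp by (simp add: divide_le_eq_1_pos)
  also have "\<dots> \<longleftrightarrow> sqrt ((\<beta> * sin (2*x))^2) \<le> sqrt (1 - (z x)^2)"
    using bS by simp
  also have "\<dots> \<longleftrightarrow> (\<beta> * sin (2*x))^2 \<le> 1 - (z x)^2" by (rule real_sqrt_le_iff)
  also have "(\<beta> * sin (2*x))^2 = \<beta>^2 * (1 - (cos (2*x))^2)"
    by (simp add: power_mult_distrib sin_squared_eq)
  also have "\<beta>^2 * (1 - (cos (2*x))^2) \<le> 1 - (z x)^2 \<longleftrightarrow> \<beta>^2 - 1 + \<gamma>^2 + 2*\<gamma>*\<beta>*cos (2*x) \<le> 0"
    unfolding z_def by (simp add: power2_eq_square algebra_simps)
  finally show ?thesis .
qed

definition "TT = {x \<in> {a..b}. dpsi x \<le> 1}"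

lemma TT_convex: assumes "x \<in> TT" "x' \<in> TT" "x \<le> y" "y \<le> x'" shows "y \<in> TT"
proof -
  have xs: "x \<in> {a..b}" "x' \<in> {a..b}" "y \<in> {a..b}" using assms by (auto simp: TT_def)
  define K1 where "K1 = 2*\<gamma>*\<beta>"
  define K0 where "K0 = \<beta>^2 - 1 + \<gamma>^2"
  have gx: "K0 + K1 * cos (2*x) \<le> 0" and gx': "K0 + K1 * cos (2*x') \<le> 0"
    using assms(1,2) xs dpsi_le1_iff unfolding TT_def K0_def K1_def by (auto simp: algebra_simps)
  have c1: "cos (2*y) \<le> cos (2*x)" using assms x_range[OF xs(1)] x_range[OF xs(2)] x_range[OF xs(3)] by (intro cos_monotone_0_pi_le) auto
  have c2: "cos (2*x') \<le> cos (2*y)" using assms x_range[OF xs(1)] x_range[OF xs(2)] x_range[OF xs(3)] by (intro cos_monotone_0_pi_le) auto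
  have "K0 + K1 * cos (2*y) \<le> 0"
  proof (cases "0 \<le> K1")
    case True
    then have "K1 * cos (2*y) \<le> K1 * cos (2*x)" using c1 by (intro mult_left_mono)
    then show ?thesis using gx by linarith
  next
    case False
    then have "K1 * cos (2*y) \<le> K1 * cos (2*x')" using c2 by (intro mult_left_mono_neg) auto
    then show ?thesis using gx' by linarith
  qed
  then show ?thesis using xs dpsi_le1_iff[of y] unfolding TT_def K0_def K1_def by (auto simp: algebra_simps)
qed

lemma TT_closed: "closed TT"
proof -
  have "TT = {a..b} \<inter> dpsi -` {..1}" by (auto simp: TT_def)
  then show ?thesis using continuous_closed_preimage[OF dpsi_cont] by auto
qed

lemma TT_interval: assumes "TT \<noteq> {}" obtains e1 e2 where "a \<le> e1" "e1 \<le> e2" "e2 \<le> b" "TT = {e1..e2}"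
proof -
  have bd: "bdd_below TT" "bdd_above TT" by (auto simp: TT_def bdd_below_def bdd_above_def)
  define e1 where "e1 = Inf TT"
  define e2 where "e2 = Sup TT"
  have e1: "e1 \<in> TT" unfolding e1_def by (rule closed_contains_Inf[OF assms bd(1) TT_closed])
  have e2: "e2 \<in> TT" unfolding e2_def by (rule closed_contains_Sup[OF assms bd(2) TT_closed])
  have sub: "TT \<subseteq> {e1..e2}" unfolding e1_def e2_def using bd by (auto intro: cInf_lower cSup_upper)
  have "{e1..e2} \<subseteq> TT" using TT_convex[OF e1 e2] by auto
  then have "TT = {e1..e2}" using sub by auto
  moreover have "a \<le> e1" "e2 \<le> b" using e1 e2 by (auto simp: TT_def)
  moreover have "e1 \<le> e2" using e1 sub by auto
  ultimately show ?thesis using that by blast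
qed

lemma int_FTC: assumes e: "a \<le> e1" "e1 \<le> e2" "e2 \<le> b"
  shows "(\<integral>\<^sup>+x. ennreal (dpsi x * indicator {e1..e2} x) \<partial>lborel) = ennreal (psi0 e2 - psi0 e1)"
proof -
  have "(\<integral>\<^sup>+x. ennreal (1 * indicator {psi0 e1..psi0 e2} x) \<partial>lborel) = (\<integral>\<^sup>+x. ennreal (1 * dpsi x * indicator {e1..e2} x) \<partial>lborel)"
  proof (rule nn_integral_substitution[where f="\<lambda>_. 1"])
    show "\<And>x. x \<in> {e1..e2} \<Longrightarrow> (psi0 has_real_derivative dpsi x) (at x)"
      using e by (intro psi0_deriv) auto
    show "continuous_on {e1..e2} dpsi" by (rule continuous_on_subset[OF dpsi_cont]) (use e in auto)
    show "\<And>x. x \<in> {e1..e2} \<Longrightarrow> 0 \<le> dpsi x" using e dpsi_pos by (auto intro: less_imp_le)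
    show "set_borel_measurable borel {psi0 e1..psi0 e2} (\<lambda>_. 1::real)"
      unfolding set_borel_measurable_def by measurable
  qed (use e in auto)
  moreover have "(\<integral>\<^sup>+x. ennreal (1 * indicator {psi0 e1..psi0 e2} x) \<partial>lborel) = ennreal (psi0 e2 - psi0 e1)"
  proof -
    have "(\<integral>\<^sup>+x. ennreal (1 * indicator {psi0 e1..psi0 e2} x) \<partial>lborel) = emeasure lborel {psi0 e1..psi0 e2}"
      by (simp add: ennreal_indicator)
    also have "\<dots> = ennreal (psi0 e2 - psi0 e1)" using psi0_mono[OF e] by simp
    finally show ?thesis .
  qed
  ultimately show ?thesis by simp
qed

lemma int_lower: "ennreal (b - a - 4 * sqrt \<delta>) \<le> (\<integral>\<^sup>+x. ennreal (max 0 (min 1 (dpsi x)) * indicator {a..b} x) \<partial>lborel)"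
proof (cases "TT = {}")
  case True
  have "(\<integral>\<^sup>+x. ennreal (max 0 (min 1 (dpsi x)) * indicator {a..b} x) \<partial>lborel) = (\<integral>\<^sup>+x. indicator {a..b} x \<partial>lborel)"
  proof (intro nn_integral_cong)
    fix x :: real
    show "ennreal (max 0 (min 1 (dpsi x)) * indicator {a..b} x) = indicator {a..b} x"
    proof (cases "x \<in> {a..b}")
      case xin: True
      then have "\<not> dpsi x \<le> 1" using True by (auto simp: TT_def)
      then show ?thesis using xin by simp
    qed simp
  qed
  also have "\<dots> = ennreal (b - a)" using a_props by simp
  finally show ?thesis using sqd by (simp add: ennreal_leI)
next
  case False
  obtain e1 e2 where e: "a \<le> e1" "e1 \<le> e2" "e2 \<le> b" and T: "TT = {e1..e2}"
    using TT_interval[OF False] by blast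
  have "(\<integral>\<^sup>+x. ennreal (max 0 (min 1 (dpsi x)) * indicator {a..b} x) \<partial>lborel)
      = (\<integral>\<^sup>+x. (indicator {a..<e1} x + indicator {e2<..b} x) + ennreal (dpsi x * indicator {e1..e2} x) \<partial>lborel)"
  proof (intro nn_integral_cong)
    fix x :: real
    consider "x < a" | "a \<le> x \<and> x < e1" | "e1 \<le> x \<and> x \<le> e2" | "e2 < x \<and> x \<le> b" | "b < x" by linarith
    then show "ennreal (max 0 (min 1 (dpsi x)) * indicator {a..b} x) =
        (indicator {a..<e1} x + indicator {e2<..b} x) + ennreal (dpsi x * indicator {e1..e2} x)"
    proof cases
      case 2
      then have "x \<notin> TT" using T by auto
      then have "\<not> dpsi x \<le> 1" using 2 e by (auto simp: TT_def)
      then show ?thesis using 2 e by (simp add: indicator_def)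
    next
      case 3
      then have "x \<in> TT" using T by auto
      then have "dpsi x \<le> 1" "0 < dpsi x" using dpsi_pos[of x] by (auto simp: TT_def)
      then show ?thesis using 3 e by (simp add: indicator_def)
    next
      case 4
      then have "x \<notin> TT" using T by auto
      then have "\<not> dpsi x \<le> 1" using 4 e by (auto simp: TT_def)
      then show ?thesis using 4 e by (simp add: indicator_def)
    qed (use e in \<open>auto simp: indicator_def\<close>)
  qed
  also have "\<dots> = (emeasure lborel {a..<e1} + emeasure lborel {e2<..b}) + ennreal (psi0 e2 - psi0 e1)"
    by (subst nn_integral_add) (auto simp: nn_integral_add int_FTC[OF e])
  also have "\<dots> = ennreal ((e1 - a) + (b - e2) + (psi0 e2 - psi0 e1))"
    using e psi0_mono[OF e] by (simp add: ennreal_plus)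
  finally have eq: "(\<integral>\<^sup>+x. ennreal (max 0 (min 1 (dpsi x)) * indicator {a..b} x) \<partial>lborel) = ennreal ((e1 - a) + (b - e2) + (psi0 e2 - psi0 e1))" .
  have "\<bar>psi0 e1 - e1\<bar> \<le> 2 * sqrt \<delta>" "\<bar>psi0 e2 - e2\<bar> \<le> 2 * sqrt \<delta>"
    using e by (auto intro!: psi0_close)
  then have "b - a - 4 * sqrt \<delta> \<le> (e1 - a) + (b - e2) + (psi0 e2 - psi0 e1)" by linarith
  then show ?thesis unfolding eq by (rule ennreal_leI)
qed

lemma w01: "0 \<le> w x \<and> w x \<le> 1"
proof -
  have "0 \<le> max 0 (min 1 (dpsi x)) * indicator {a..b} x" by simp
  moreover have "max 0 (min 1 (dpsi x)) * indicator {a..b} x \<le> 1" by (simp add: indicator_def)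
  ultimately show ?thesis unfolding w_def using eta0 eta1
    by (auto simp: mult.assoc intro!: mult_le_one)
qed

lemma k01: "0 \<le> k x \<and> k x \<le> 1"
proof -
  have "0 \<le> max 0 (min 1 (1 / dpsi (psiinv x))) * indicator {psi0 a..psi0 b} x" by simp
  moreover have "max 0 (min 1 (1 / dpsi (psiinv x))) * indicator {psi0 a..psi0 b} x \<le> 1" by (simp add: indicator_def)
  ultimately show ?thesis unfolding k_def using eta0 eta1
    by (auto simp: mult.assoc intro!: mult_le_one)
qed

lemma psiI: "x \<in> {0..pi/2} \<Longrightarrow> psi x \<in> {0..pi/2}"
  using psi0_range[of x] by (auto simp: psi_def)

lemma ab_sub: "{a..b} \<subseteq> {0..pi/2}" "{psi0 a..psi0 b} \<subseteq> {0..pi/2}"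
  using a_props psi0_range[of a] psi0_range[of b] by auto

lemma ident_lborel:
  assumes Y[measurable]: "Y \<in> sets borel"
  shows "(\<integral>\<^sup>+x. ennreal (w x) * indicator Y (psi x) * indicator {0..pi/2} x \<partial>lborel)
       = (\<integral>\<^sup>+y. ennreal (k y) * indicator Y y * indicator {0..pi/2} y \<partial>lborel)"
proof -
  define f where "f y = (1 - \<eta>) * max 0 (min 1 (1 / dpsi (psiinv y))) * indicator Y y" for y
  have f[measurable]: "f \<in> borel_measurable borel" unfolding f_def[abs_def] by measurable
  have "(\<integral>\<^sup>+y. ennreal (f y * indicator {psi0 a..psi0 b} y) \<partial>lborel) = (\<integral>\<^sup>+x. ennreal (f (psi0 x) * dpsi x * indicator {a..b} x) \<partial>lborel)"
  proof (rule nn_integral_substitution)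
    show "\<And>x. x \<in> {a..b} \<Longrightarrow> (psi0 has_real_derivative dpsi x) (at x)" by (rule psi0_deriv)
    show "continuous_on {a..b} dpsi" by (rule dpsi_cont)
    show "\<And>x. x \<in> {a..b} \<Longrightarrow> 0 \<le> dpsi x" using dpsi_pos by (auto intro: less_imp_le)
    show "set_borel_measurable borel {psi0 a..psi0 b} f"
      unfolding set_borel_measurable_def by measurable
  qed (use a_props in auto)
  moreover have "(\<integral>\<^sup>+y. ennreal (f y * indicator {psi0 a..psi0 b} y) \<partial>lborel)
       = (\<integral>\<^sup>+y. ennreal (k y) * indicator Y y * indicator {0..pi/2} y \<partial>lborel)"
  proof (intro nn_integral_cong)
    fix y
    show "ennreal (f y * indicator {psi0 a..psi0 b} y) = ennreal (k y) * indicator Y y * indicator {0..pi/2} y"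
      using ab_sub(2) unfolding f_def k_def by (auto simp: indicator_def)
  qed
  moreover have "(\<integral>\<^sup>+x. ennreal (f (psi0 x) * dpsi x * indicator {a..b} x) \<partial>lborel)
       = (\<integral>\<^sup>+x. ennreal (w x) * indicator Y (psi x) * indicator {0..pi/2} x \<partial>lborel)"
  proof (intro nn_integral_cong)
    fix x
    show "ennreal (f (psi0 x) * dpsi x * indicator {a..b} x) = ennreal (w x) * indicator Y (psi x) * indicator {0..pi/2} x"
    proof (cases "x \<in> {a..b}")
      case True
      have d: "0 < dpsi x" by (rule dpsi_pos[OF True])
      have m: "max 0 (min 1 (1 / dpsi x)) * dpsi x = max 0 (min 1 (dpsi x))"
        using d by (cases "dpsi x \<le> 1") (auto simp: min_def max_def field_simps)
      have "f (psi0 x) * dpsi x * indicator {a..b} x = (1 - \<eta>) * (max 0 (min 1 (1 / dpsi x)) * dpsi x) * indicator Y (psi0 x)"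
        using True unfolding f_def by (simp add: psiinv_psi0 algebra_simps)
      also have "\<dots> = w x * indicator Y (psi x)"
        using True unfolding m w_def psi_def by simp
      finally show ?thesis using True ab_sub(1) by (auto simp: indicator_def)
    next
      case False
      then show ?thesis by (simp add: w_def)
    qed
  qed
  ultimately show ?thesis by simp
qed

abbreviation "UQ \<equiv> uniform_measure lborel {0..pi/2::real}"

lemma ident:
  assumes Y[measurable]: "Y \<in> sets borel"
  shows "(\<integral>\<^sup>+x. ennreal (w x) * indicator Y (psi x) \<partial>UQ) = (\<integral>\<^sup>+y. ennreal (k y) * indicator Y y \<partial>UQ)"
  by (simp add: nn_integral_uniform_measure ident_lborel[OF Y])

lemma posint: "(\<integral>\<^sup>+x. ennreal (1 - w x) \<partial>UQ) \<noteq> 0"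
proof -
  interpret U: prob_space UQ by (rule prob_space_uniform_measure) auto
  have "(\<integral>\<^sup>+x. ennreal \<eta> \<partial>UQ) \<le> (\<integral>\<^sup>+x. ennreal (1 - w x) \<partial>UQ)"
  proof (rule nn_integral_mono)
    fix x
    have "w x \<le> 1 - \<eta>"
    proof -
      have "max 0 (min 1 (dpsi x)) * indicator {a..b} x \<le> 1" by (simp add: indicator_def)
      moreover have "0 \<le> max 0 (min 1 (dpsi x)) * indicator {a..b} x" by simp
      ultimately have "(1 - \<eta>) * (max 0 (min 1 (dpsi x)) * indicator {a..b} x) \<le> (1 - \<eta>) * 1"
        using eta1 by (intro mult_left_mono) auto
      then show ?thesis unfolding w_def by (simp add: mult.assoc)
    qed
    then show "ennreal \<eta> \<le> ennreal (1 - w x)" by (intro ennreal_leI) simp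
  qed
  moreover have "(\<integral>\<^sup>+x. ennreal \<eta> \<partial>UQ) = ennreal \<eta>" using U.emeasure_space_1 by simp
  moreover have "0 < ennreal \<eta>" using eta0 by simp
  ultimately have "0 < (\<integral>\<^sup>+x. ennreal (1 - w x) \<partial>UQ)" by (metis order.strict_trans2)
  then show ?thesis by simp
qed

lemma wint_lower: "ennreal ((1 - \<eta>) * (1 - 6 * sqrt \<delta>)) \<le> (\<integral>\<^sup>+x. ennreal (w x) \<partial>UQ)"
proof -
  have "(\<integral>\<^sup>+x. ennreal (w x) \<partial>UQ) = (\<integral>\<^sup>+x. ennreal (w x) * indicator {0..pi/2} x \<partial>lborel) / ennreal (pi/2)"
    by (simp add: nn_integral_uniform_measure)
  also have "(\<integral>\<^sup>+x. ennreal (w x) * indicator {0..pi/2} x \<partial>lborel)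
      = (\<integral>\<^sup>+x. ennreal (1 - \<eta>) * ennreal (max 0 (min 1 (dpsi x)) * indicator {a..b} x) \<partial>lborel)"
    using ab_sub(1) eta1 by (intro nn_integral_cong) (auto simp: w_def indicator_def ennreal_mult[symmetric])
  also have "\<dots> = ennreal (1 - \<eta>) * (\<integral>\<^sup>+x. ennreal (max 0 (min 1 (dpsi x)) * indicator {a..b} x) \<partial>lborel)"
    by (rule nn_integral_cmult) measurable
  finally have eq: "(\<integral>\<^sup>+x. ennreal (w x) \<partial>UQ) = ennreal (1 - \<eta>) * (\<integral>\<^sup>+x. ennreal (max 0 (min 1 (dpsi x)) * indicator {a..b} x) \<partial>lborel) / ennreal (pi/2)" .
  have "ennreal (1 - \<eta>) * ennreal (b - a - 4 * sqrt \<delta>) / ennreal (pi/2) \<le> (\<integral>\<^sup>+x. ennreal (w x) \<partial>UQ)"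
    unfolding eq by (intro divide_right_mono_ennreal mult_left_mono int_lower) auto
  moreover have "ennreal (1 - \<eta>) * ennreal (b - a - 4 * sqrt \<delta>) / ennreal (pi/2) \<ge> ennreal ((1 - \<eta>) * (1 - 6 * sqrt \<delta>))"
  proof -
    have ba: "b - a - 4 * sqrt \<delta> \<ge> pi/2 - 8 * sqrt \<delta>" using a_props unfolding b_def by linarith
    have "pi/2 - 8 * sqrt \<delta> \<ge> (pi/2) * (1 - 6 * sqrt \<delta>)"
      using pi_gt3 sqd by (simp add: algebra_simps)
    then have le: "(pi/2) * (1 - 6 * sqrt \<delta>) \<le> b - a - 4 * sqrt \<delta>" using ba by linarith
    have nn: "0 \<le> b - a - 4 * sqrt \<delta>" using ba sqd pi_gt3 by linarith
    have "ennreal (1 - \<eta>) * ennreal (b - a - 4 * sqrt \<delta>) / ennreal (pi/2) = ennreal ((1 - \<eta>) * (b - a - 4 * sqrt \<delta>) / (pi/2))"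
      using nn eta1 by (simp add: ennreal_mult[symmetric] divide_ennreal)
    moreover have "(1 - \<eta>) * (1 - 6 * sqrt \<delta>) \<le> (1 - \<eta>) * (b - a - 4 * sqrt \<delta>) / (pi/2)"
    proof -
      have "(1 - \<eta>) * ((pi/2) * (1 - 6 * sqrt \<delta>)) \<le> (1 - \<eta>) * (b - a - 4 * sqrt \<delta>)"
        using le eta1 by (intro mult_left_mono) auto
      then show ?thesis using pi_gt_zero by (simp add: field_simps)
    qed
    ultimately show ?thesis by (simp add: ennreal_leI)
  qed
  ultimately show ?thesis by (rule order_trans[rotated])
qed

end


theorem lemma4p6:
  fixes p q q' :: real
  assumes "1 < p" and "p < q'" and "q' < q / 2"
  shows "\<exists>N0::real. \<forall>n::nat. real n > N0 \<longrightarrow>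
    (\<forall>A B C D :: real.
       0 \<le> A \<and> A \<le> 1 \<and> 0 \<le> B \<and> B \<le> 1 \<and>
       0 \<le> C \<and> C \<le> 1 \<and> 0 \<le> D \<and> D \<le> 1 \<and>
       \<bar>A - C\<bar> \<le> real n powr (- q) \<and> \<bar>B - D\<bar> \<le> real n powr (- q) \<and>
       B \<ge> real n powr (- p) \<and> D \<ge> real n powr (- p)
     \<longrightarrow>
     (\<exists>M :: (real \<times> real) measure.
        prob_space M \<and>
        sets M = sets (borel \<Otimes>\<^sub>M borel) \<and>
        distr M borel fst = uniform_measure lborel {0..<2*pi} \<and>
        distr M borel snd = uniform_measure lborel {0..<2*pi} \<and>
        measure M {z \<in> space M. A + B * (cos (fst z))^2 = C + D * (cos (snd z))^2}
          \<ge> 1 - 6000 * real n powr (- min (q' / 2) (q - 2 * q')) \<and>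
        (AE z in M. cos (fst z) * cos (snd z) \<ge> 0 \<and> sin (fst z) * sin (snd z) \<ge> 0)))"
proof (intro exI[of _ 768] allI impI)
  fix n :: nat and A B C D :: real
  assume n: "768 < real n"
  assume H: "0 \<le> A \<and> A \<le> 1 \<and> 0 \<le> B \<and> B \<le> 1 \<and>
       0 \<le> C \<and> C \<le> 1 \<and> 0 \<le> D \<and> D \<le> 1 \<and>
       \<bar>A - C\<bar> \<le> real n powr (- q) \<and> \<bar>B - D\<bar> \<le> real n powr (- q) \<and>
       B \<ge> real n powr (- p) \<and> D \<ge> real n powr (- p)"
  define c where "c = min (q' / 2) (q - 2 * q')"
  define N where "N = real n"
  have N1: "1 < N" using n unfolding N_def by simp
  have c0: "0 < c" using assms unfolding c_def by simp
  have "c \<le> q' / 2" unfolding c_def by (rule min.cobounded1)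
  then have cle: "c \<le> (q - p) / 2" using assms by argo
  have qp: "1 \<le> q - p" using assms by simp
  have Dpos: "0 < D" using H N1 unfolding N_def[symmetric] by (smt (verit) powr_gt_zero)
  have Bpos: "0 < B" using H N1 unfolding N_def[symmetric] by (smt (verit) powr_gt_zero)
  define \<beta> where "\<beta> = B / D"
  define \<gamma> where "\<gamma> = 2 * (A - C) / D + \<beta> - 1"
  define \<delta> where "\<delta> = 3 * N powr (p - q)"
  define \<eta> where "\<eta> = N powr (- c)"
  have ratio: "N powr (- q) / D \<le> N powr (p - q)"
  proof -
    have "N powr (- q) / D \<le> N powr (- q) / N powr (- p)"
      using H Dpos N1 unfolding N_def[symmetric] by (intro divide_left_mono) auto
    also have "\<dots> = N powr (p - q)" using N1 by (simp add: powr_diff[symmetric])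
    finally show ?thesis .
  qed
  have b1: "\<bar>\<beta> - 1\<bar> \<le> N powr (p - q)"
  proof -
    have "\<bar>\<beta> - 1\<bar> = \<bar>B - D\<bar> / D" unfolding \<beta>_def using Dpos by (simp add: field_simps abs_divide)
    also have "\<dots> \<le> N powr (- q) / D" using H Dpos unfolding N_def[symmetric] by (intro divide_right_mono) auto
    finally show ?thesis using ratio by linarith
  qed
  have g1: "\<bar>\<gamma>\<bar> \<le> \<delta>"
  proof -
    have "\<bar>2 * (A - C) / D\<bar> = 2 * (\<bar>A - C\<bar> / D)" using Dpos by (simp only: abs_divide abs_mult abs_numeral)
    also have "\<dots> \<le> 2 * (N powr (- q) / D)" using H Dpos unfolding N_def[symmetric] by (intro mult_left_mono divide_right_mono) auto
    finally have "\<bar>2 * (A - C) / D\<bar> \<le> 2 * N powr (p - q)" using ratio by linarith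
    moreover have "\<bar>\<gamma>\<bar> \<le> \<bar>2 * (A - C) / D\<bar> + \<bar>\<beta> - 1\<bar>"
      unfolding \<gamma>_def using abs_triangle_ineq[of "2 * (A - C) / D" "\<beta> - 1"] by (simp add: algebra_simps)
    ultimately show ?thesis using b1 unfolding \<delta>_def by linarith
  qed
  have d0: "0 < \<delta>" unfolding \<delta>_def using N1 by simp
  have dsm: "\<delta> \<le> 1/256"
  proof -
    have "N powr 1 \<le> N powr (q - p)" using N1 qp by (intro powr_mono) auto
    then have "768 < N powr (q - p)" using n N1 unfolding N_def by simp
    moreover have "N powr (p - q) = 1 / N powr (q - p)" using powr_minus_divide[of N "q - p"] by simp
    moreover have "1 / N powr (q - p) < 1/768"
      using \<open>768 < N powr (q - p)\<close> by (intro divide_strict_left_mono) auto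
    ultimately have "N powr (p - q) < 1/768" by simp
    then show ?thesis unfolding \<delta>_def by simp
  qed
  have e0: "0 < \<eta>" "\<eta> < 1" unfolding \<eta>_def using N1 c0 by (auto intro!: powr_less_one)
  interpret ana \<beta> \<gamma> \<delta> \<eta>
    using d0 dsm b1 g1 e0 N1 unfolding \<delta>_def by unfold_locales auto
  have exK: "\<exists>K. prob_space K \<and> sets K = sets (borel \<Otimes>\<^sub>M borel) \<and> distr K borel fst = UQ \<and> distr K borel snd = UQ
     \<and> (\<forall>E\<in>sets (borel \<Otimes>\<^sub>M borel). emeasure K E \<ge> (\<integral>\<^sup>+x. ennreal (w x) * indicator E (x, psi x) \<partial>UQ))
     \<and> (AE z in K. fst z \<in> {0..pi/2} \<and> snd z \<in> {0..pi/2})"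
    by (rule core_coupling[OF _ _ _ w_meas k_meas psi_meas w01 k01 psiI ident posint]) auto
  obtain K where K: "prob_space K" "sets K = sets (borel \<Otimes>\<^sub>M borel)" "distr K borel fst = UQ" "distr K borel snd = UQ"
    "\<forall>E\<in>sets (borel \<Otimes>\<^sub>M borel). emeasure K E \<ge> (\<integral>\<^sup>+x. ennreal (w x) * indicator E (x, psi x) \<partial>UQ)"
    "AE z in K. fst z \<in> {0..pi/2} \<and> snd z \<in> {0..pi/2}"
    using exK by (elim exE conjE) (rule that; assumption)
  have exM: "\<exists>M. prob_space M \<and> sets M = sets (borel \<Otimes>\<^sub>M borel) \<and> distr M borel fst = uniform_measure lborel {0..<2*pi} \<and> distr M borel snd = uniform_measure lborel {0..<2*pi}
    \<and> (\<forall>E\<in>sets (borel \<Otimes>\<^sub>M borel). (\<forall>j x y. (rho j x, rho j y) \<in> E \<longleftrightarrow> (x, y) \<in> E) \<longrightarrow> emeasure M E = emeasure K E)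
    \<and> (AE z in M. cos (fst z) * cos (snd z) \<ge> 0 \<and> sin (fst z) * sin (snd z) \<ge> 0)"
    by (rule lift[OF K(1) K(2) K(3) K(4) K(6)])
  obtain M where M: "prob_space M" "sets M = sets (borel \<Otimes>\<^sub>M borel)"
    "distr M borel fst = uniform_measure lborel {0..<2*pi}" "distr M borel snd = uniform_measure lborel {0..<2*pi}"
    "\<forall>E\<in>sets (borel \<Otimes>\<^sub>M borel). (\<forall>j x y. (rho j x, rho j y) \<in> E \<longleftrightarrow> (x, y) \<in> E) \<longrightarrow> emeasure M E = emeasure K E"
    "AE z in M. cos (fst z) * cos (snd z) \<ge> 0 \<and> sin (fst z) * sin (snd z) \<ge> 0"
    using exM by (elim exE conjE) (rule that; assumption)
  interpret M: prob_space M by (rule M(1))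
  define E where "E = {z::real\<times>real. A + B * (cos (fst z))^2 = C + D * (cos (snd z))^2}"
  have Em: "E \<in> sets (borel \<Otimes>\<^sub>M borel)"
  proof -
    have "E = {z \<in> space (borel \<Otimes>\<^sub>M borel). A + B * (cos (fst z))^2 = C + D * (cos (snd z))^2}"
      by (simp add: E_def space_pair_measure)
    also have "\<dots> \<in> sets (borel \<Otimes>\<^sub>M borel)" by measurable
    finally show ?thesis .
  qed
  have Einv: "\<forall>j x y. (rho j x, rho j y) \<in> E \<longleftrightarrow> (x, y) \<in> E"
    by (simp add: E_def rho_trig(3))
  have rel: "(x, psi x) \<in> E" if x: "x \<in> {a..b}" for x
  proof -
    have cz: "cos (2 * psi0 x) = \<gamma> + \<beta> * cos (2*x)" using cos_psi0[OF x] by (simp add: z_def)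
    define u where "u = (cos (psi0 x))^2"
    define v where "v = (cos x)^2"
    have "2 * u - 1 = \<gamma> + \<beta> * (2 * v - 1)"
      using cz unfolding u_def v_def by (simp add: cos_double_cos)
    then have "2 * u - 1 = 2 * ((A - C) / D) + 2 * ((B / D) * v) - 1"
      unfolding \<gamma>_def \<beta>_def by (simp add: algebra_simps)
    then have "u = (A - C) / D + (B / D) * v" by linarith
    then have "D * u = D * ((A - C) / D) + (D * (B / D)) * v" by (simp add: algebra_simps)
    also have "D * ((A - C) / D) = A - C" using Dpos by simp
    also have "D * (B / D) = B" using Dpos by simp
    finally have "D * u = A - C + B * v" .
    then have "A + B * (cos x)^2 = C + D * (cos (psi0 x))^2" unfolding u_def v_def by linarith
    then show ?thesis using x by (simp add: E_def psi_def)
  qed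
  have "ennreal ((1 - \<eta>) * (1 - 6 * sqrt \<delta>)) \<le> (\<integral>\<^sup>+x. ennreal (w x) \<partial>UQ)" by (rule wint_lower)
  also have "(\<integral>\<^sup>+x. ennreal (w x) \<partial>UQ) = (\<integral>\<^sup>+x. ennreal (w x) * indicator E (x, psi x) \<partial>UQ)"
  proof (intro nn_integral_cong)
    fix x
    show "ennreal (w x) = ennreal (w x) * indicator E (x, psi x)"
      by (cases "x \<in> {a..b}") (auto simp: rel w_def)
  qed
  also have "\<dots> \<le> emeasure K E" using K(5) Em by blast
  also have "\<dots> = emeasure M E" using M(5) Em Einv by simp
  also have "\<dots> = ennreal (measure M E)" by (rule M.emeasure_eq_measure)
  finally have le: "ennreal ((1 - \<eta>) * (1 - 6 * sqrt \<delta>)) \<le> ennreal (measure M E)" .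
  have mE: "(1 - \<eta>) * (1 - 6 * sqrt \<delta>) \<le> measure M E"
    using le measure_nonneg[of M E] by (auto simp: ennreal_le_iff2)
  have sd: "sqrt \<delta> \<le> 2 * \<eta>"
  proof -
    have "sqrt \<delta> = sqrt 3 * sqrt (N powr (p - q))" unfolding \<delta>_def by (simp add: real_sqrt_mult)
    also have "sqrt (N powr (p - q)) = N powr ((p - q) / 2)"
      using N1 by (simp add: powr_half_sqrt[symmetric] powr_powr)
    also have "N powr ((p - q) / 2) \<le> N powr (- c)" using N1 cle by (intro powr_mono) auto
    then have "sqrt 3 * N powr ((p - q) / 2) \<le> 2 * N powr (- c)"
    proof -
      have "sqrt 3 \<le> sqrt 4" by (rule real_sqrt_le_mono) simp
      then have s3: "sqrt 3 \<le> (2::real)" by simp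
      show ?thesis using s3 \<open>N powr ((p - q) / 2) \<le> N powr (- c)\<close>
        by (intro mult_mono) auto
    qed
    finally show ?thesis unfolding \<eta>_def .
  qed
  have "1 - 6000 * N powr (- c) \<le> (1 - \<eta>) * (1 - 6 * sqrt \<delta>)"
  proof -
    have "(1 - \<eta>) * (1 - 6 * sqrt \<delta>) = 1 - \<eta> - 6 * sqrt \<delta> + 6 * \<eta> * sqrt \<delta>" by (simp add: algebra_simps)
    moreover have "0 \<le> 6 * \<eta> * sqrt \<delta>" using e0 d0 by simp
    ultimately show ?thesis using sd e0 unfolding \<eta>_def by linarith
  qed
  then have final: "1 - 6000 * N powr (- c) \<le> measure M E" using mE by linarith
  have eqE: "{z \<in> space M. A + B * (cos (fst z))^2 = C + D * (cos (snd z))^2} = E"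
    by (auto simp: E_def sets_eq_imp_space_eq[OF M(2)] space_pair_measure)
  have fin: "measure M {z \<in> space M. A + B * (cos (fst z))^2 = C + D * (cos (snd z))^2}
          \<ge> 1 - 6000 * real n powr (- min (q' / 2) (q - 2 * q'))"
    unfolding eqE using final unfolding N_def c_def .
  show "\<exists>M :: (real \<times> real) measure.
        prob_space M \<and>
        sets M = sets (borel \<Otimes>\<^sub>M borel) \<and>
        distr M borel fst = uniform_measure lborel {0..<2*pi} \<and>
        distr M borel snd = uniform_measure lborel {0..<2*pi} \<and>
        measure M {z \<in> space M. A + B * (cos (fst z))^2 = C + D * (cos (snd z))^2}
          \<ge> 1 - 6000 * real n powr (- min (q' / 2) (q - 2 * q')) \<and>
        (AE z in M. cos (fst z) * cos (snd z) \<ge> 0 \<and> sin (fst z) * sin (snd z) \<ge> 0)"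
    by (intro exI[of _ M] conjI M(1) M(2) M(3) M(4) M(6) fin)
qed

end
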